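(* Let $S$ and $S'$ be finite sets of pairwise disjoint axis-aligned rectangles in $\mathbb{R}^2$, and let $\mathcal{M}$ be a finite set of point-normal markers such that both $S$ and $S'$ are fully consistent with $\mathcal{M}$ (i.e. $\mathcal{M}$ is a marker-per-edge markup of both). Then $S=S'$.
   Context: An axis-aligned rectangle is a set $[a,b]\times[c,d]\subset\mathbb{R}^2$ with $a<b$, $c<d$. A (point-normal) marker is a pair $(p,n)$ with $p\in\mathbb{R}^2$ and $n\in\{(-1,0),(1,0),(0,1),(0,-1)\}$. A marker $(p,n)$ is on and aligned with an edge $e$ of a rectangle $Q$ if $p\in e$ and $n$ is the outward unit normal of $Q$ along $e$. A set of rectangles is consistent with a set of markers if every marker is on and aligned with an edge of one of the rectangles; it is fully consistent if moreover every edge of every rectangle in the set has at least one marker on and aligned with it. *)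

theory Defs
  imports Main "HOL-Library.Product_Plus" Complex_Main
begin

type_synonym point = "real \<times> real"
type_synonym marker = "point \<times> point"  (* (position p, normal n) *)

definition is_rect :: "point set \<Rightarrow> bool" where
  "is_rect Q \<longleftrightarrow> (\<exists>a b c d. a < b \<and> c < d \<and> Q = {a..b} \<times> {c..d})"

definition normals :: "point set" where
  "normals = {(-1,0), (1,0), (0,1), (0,-1)}"

definition is_marker :: "marker \<Rightarrow> bool" where
  "is_marker m \<longleftrightarrow> snd m \<in> normals"

definition edges :: "point set \<Rightarrow> (point set \<times> point) set" where
  "edges Q = {en. \<exists>a b c d. a < b \<and> c < d \<and> Q = {a..b} \<times> {c..d} \<and>
      en \<in> {({a} \<times> {c..d}, (-1,0)), ({b} \<times> {c..d}, (1,0)),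
            ({a..b} \<times> {d}, (0,1)), ({a..b} \<times> {c}, (0,-1))}}"

definition on_aligned :: "marker \<Rightarrow> (point set \<times> point) \<Rightarrow> bool" where
  "on_aligned m en \<longleftrightarrow> fst m \<in> fst en \<and> snd m = snd en"

definition consistent :: "point set set \<Rightarrow> marker set \<Rightarrow> bool" where
  "consistent S M \<longleftrightarrow> (\<forall>m\<in>M. \<exists>Q\<in>S. \<exists>en\<in>edges Q. on_aligned m en)"

definition fully_consistent :: "point set set \<Rightarrow> marker set \<Rightarrow> bool" where
  "fully_consistent S M \<longleftrightarrow> consistent S M \<and>
     (\<forall>Q\<in>S. \<forall>en\<in>edges Q. \<exists>m\<in>M. on_aligned m en)"

end

theory Submission
  imports Defs
begin

lemma rect_eq:
  fixes a b c d a2 b2 c2 d2 :: real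
  assumes "a < b" "c < d" "{a..b} \<times> {c..d} = {a2..b2} \<times> {c2..d2}"
  shows "a = a2 \<and> b = b2 \<and> c = c2 \<and> d = d2"
  using assms by (auto simp: times_eq_iff Icc_eq_Icc)

lemma edges_eq:
  fixes a b c d :: real
  assumes "a < b" "c < d"
  shows "edges ({a..b} \<times> {c..d}) = {({a} \<times> {c..d}, (-1,0)), ({b} \<times> {c..d}, (1,0)),
            ({a..b} \<times> {d}, (0,1)), ({a..b} \<times> {c}, (0,-1))}" (is "_ = ?E")
proof (rule set_eqI, rule iffI)
  fix en assume "en \<in> edges ({a..b} \<times> {c..d})"
  then obtain a2 b2 c2 d2 where h: "a2 < b2" "c2 < d2" "{a..b} \<times> {c..d} = {a2..b2} \<times> {c2..d2}"
    "en \<in> {({a2} \<times> {c2..d2}, (-1,0)), ({b2} \<times> {c2..d2}, (1,0)),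
            ({a2..b2} \<times> {d2}, (0,1)), ({a2..b2} \<times> {c2}, (0,-1))}"
    unfolding edges_def by blast
  have "a = a2" "b = b2" "c = c2" "d = d2" using rect_eq[OF assms h(3)] by auto
  then show "en \<in> ?E" using h(4) by simp
next
  fix en assume h: "en \<in> ?E"
  show "en \<in> edges ({a..b} \<times> {c..d})"
    unfolding edges_def mem_Collect_eq
    apply (rule exI[of _ a], rule exI[of _ b], rule exI[of _ c], rule exI[of _ d])
    using assms h by simp
qed

lemma disj_pt:
  assumes "pairwise disjnt S" "P \<in> S" "Q \<in> S" "p \<in> P" "p \<in> Q"
  shows "P = Q"
  using assms by (metis disjnt_iff pairwiseD)

lemma get_marker:
  assumes "fully_consistent S M" "consistent T M" "\<forall>Q\<in>T. is_rect Q"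
    "{a..b} \<times> {c..d} \<in> S" "a < b" "c < d" "en \<in> edges ({a..b} \<times> {c..d})"
  shows "\<exists>P a2 b2 c2 d2 p. P \<in> T \<and> P = {a2..b2} \<times> {c2..d2} \<and> a2 < b2 \<and> c2 < d2 \<and>
     p \<in> fst en \<and> (\<exists>e2 \<in> edges P. snd e2 = snd en \<and> p \<in> fst e2)"
proof -
  have f1: "\<forall>Q\<in>S. \<forall>en\<in>edges Q. \<exists>m\<in>M. on_aligned m en"
    using assms(1) unfolding fully_consistent_def by (rule conjunct2)
  have "\<exists>m\<in>M. on_aligned m en" using bspec[OF bspec[OF f1 assms(4)] assms(7)] .
  then obtain m where m: "m \<in> M" "on_aligned m en" ..
  have f2: "\<forall>m\<in>M. \<exists>Q\<in>T. \<exists>en\<in>edges Q. on_aligned m en"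
    using assms(2) unfolding consistent_def .
  have "\<exists>Q\<in>T. \<exists>en\<in>edges Q. on_aligned m en" using bspec[OF f2 m(1)] .
  then obtain P e2 where P: "P \<in> T" "e2 \<in> edges P" "on_aligned m e2" by blast
  have "is_rect P" using assms(3) P(1) by blast
  then obtain a2 b2 c2 d2 where r: "a2 < b2" "c2 < d2" "P = {a2..b2} \<times> {c2..d2}"
    unfolding is_rect_def by blast
  have o1: "fst m \<in> fst en" "snd m = snd en" using m(2) unfolding on_aligned_def by auto
  have o2: "fst m \<in> fst e2" "snd m = snd e2" using P(3) unfolding on_aligned_def by auto
  have "\<exists>e\<in>edges P. snd e = snd en \<and> fst m \<in> fst e"
    using P(2) o1 o2 by (intro bexI[of _ e2]) auto
  then have "P \<in> T \<and> P = {a2..b2} \<times> {c2..d2} \<and> a2 < b2 \<and> c2 < d2 \<and>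
     fst m \<in> fst en \<and> (\<exists>e\<in>edges P. snd e = snd en \<and> fst m \<in> fst e)"
    using P(1) r o1 by simp
  then show ?thesis by blast
qed

lemma pick4:
  fixes A B C D :: "(real \<times> real) set" and e2 :: "(real \<times> real) set \<times> (real \<times> real)"
  assumes "e2 \<in> {(A,(-1,0)),(B,(1,0)),(C,(0,1)),(D,(0,-1))}"
  shows "snd e2 = (-1,0) \<Longrightarrow> e2 = (A,(-1,0))" "snd e2 = (1,0) \<Longrightarrow> e2 = (B,(1,0))"
        "snd e2 = (0,1) \<Longrightarrow> e2 = (C,(0,1))" "snd e2 = (0,-1) \<Longrightarrow> e2 = (D,(0,-1))"
  using assms by auto

lemma left_marker:
  assumes "fully_consistent S M" "consistent T M" "\<forall>Q\<in>T. is_rect Q"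
    "{a..b} \<times> {c..d} \<in> S" "a < b" "c < d"
  shows "\<exists>b2 c2 d2 y. {a..b2} \<times> {c2..d2} \<in> T \<and> a < b2 \<and> c2 < d2 \<and> c \<le> y \<and> y \<le> d \<and> c2 \<le> y \<and> y \<le> d2"
proof -
  have "({a} \<times> {c..d}, (-1,0)) \<in> edges ({a..b} \<times> {c..d})" using edges_eq[OF assms(5,6)] by simp
  from get_marker[OF assms this] obtain P a2 b2 c2 d2 p e2 where
    h: "P \<in> T" "P = {a2..b2} \<times> {c2..d2}" "a2 < b2" "c2 < d2" "p \<in> {a} \<times> {c..d}"
    "e2 \<in> edges P" "snd e2 = (-1,0)" "p \<in> fst e2" by auto
  have "e2 = ({a2} \<times> {c2..d2}, (-1,0))" using h(6,7) edges_eq[OF h(3,4)] h(2) pick4(1) by metis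
  then have pe: "p \<in> {a2} \<times> {c2..d2}" using h(8) by simp
  have eq: "a2 = a" using pe h(5) by (cases p) auto
  have m1: "snd p \<in> {c..d}" using h(5) by (simp add: mem_Times_iff)
  have m2: "snd p \<in> {c2..d2}" using pe by (simp add: mem_Times_iff)
  have inT: "{a..b2} \<times> {c2..d2} \<in> T" using h(1,2) eq by simp
  show ?thesis
    apply (rule exI[of _ b2], rule exI[of _ c2], rule exI[of _ d2], rule exI[of _ "snd p"])
    using h(3,4) eq m1 m2 inT by simp
qed

lemma right_marker:
  assumes "fully_consistent S M" "consistent T M" "\<forall>Q\<in>T. is_rect Q"
    "{a..b} \<times> {c..d} \<in> S" "a < b" "c < d"
  shows "\<exists>a2 c2 d2 y. {a2..b} \<times> {c2..d2} \<in> T \<and> a2 < b \<and> c2 < d2 \<and> c \<le> y \<and> y \<le> d \<and> c2 \<le> y \<and> y \<le> d2"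
proof -
  have "({b} \<times> {c..d}, (1,0)) \<in> edges ({a..b} \<times> {c..d})" using edges_eq[OF assms(5,6)] by simp
  from get_marker[OF assms this] obtain P a2 b2 c2 d2 p e2 where
    h: "P \<in> T" "P = {a2..b2} \<times> {c2..d2}" "a2 < b2" "c2 < d2" "p \<in> {b} \<times> {c..d}"
    "e2 \<in> edges P" "snd e2 = (1,0)" "p \<in> fst e2" by auto
  have "e2 = ({b2} \<times> {c2..d2}, (1,0))" using h(6,7) edges_eq[OF h(3,4)] h(2) pick4(2) by metis
  then have pe: "p \<in> {b2} \<times> {c2..d2}" using h(8) by simp
  have eq: "b2 = b" using pe h(5) by (cases p) auto
  have m1: "snd p \<in> {c..d}" using h(5) by (simp add: mem_Times_iff)
  have m2: "snd p \<in> {c2..d2}" using pe by (simp add: mem_Times_iff)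
  have inT: "{a2..b} \<times> {c2..d2} \<in> T" using h(1,2) eq by simp
  show ?thesis
    apply (rule exI[of _ a2], rule exI[of _ c2], rule exI[of _ d2], rule exI[of _ "snd p"])
    using h(3,4) eq m1 m2 inT by simp
qed

lemma top_marker:
  assumes "fully_consistent S M" "consistent T M" "\<forall>Q\<in>T. is_rect Q"
    "{a..b} \<times> {c..d} \<in> S" "a < b" "c < d"
  shows "\<exists>a2 b2 c2 x. {a2..b2} \<times> {c2..d} \<in> T \<and> a2 < b2 \<and> c2 < d \<and> a \<le> x \<and> x \<le> b \<and> a2 \<le> x \<and> x \<le> b2"
proof -
  have "({a..b} \<times> {d}, (0,1)) \<in> edges ({a..b} \<times> {c..d})" using edges_eq[OF assms(5,6)] by simp
  from get_marker[OF assms this] obtain P a2 b2 c2 d2 p e2 where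
    h: "P \<in> T" "P = {a2..b2} \<times> {c2..d2}" "a2 < b2" "c2 < d2" "p \<in> {a..b} \<times> {d}"
    "e2 \<in> edges P" "snd e2 = (0,1)" "p \<in> fst e2" by auto
  have "e2 = ({a2..b2} \<times> {d2}, (0,1))" using h(6,7) edges_eq[OF h(3,4)] h(2) pick4(3) by metis
  then have pe: "p \<in> {a2..b2} \<times> {d2}" using h(8) by simp
  have eq: "d2 = d" using pe h(5) by (cases p) auto
  have m1: "fst p \<in> {a..b}" using h(5) by (simp add: mem_Times_iff)
  have m2: "fst p \<in> {a2..b2}" using pe by (simp add: mem_Times_iff)
  have inT: "{a2..b2} \<times> {c2..d} \<in> T" using h(1,2) eq by simp
  show ?thesis
    apply (rule exI[of _ a2], rule exI[of _ b2], rule exI[of _ c2], rule exI[of _ "fst p"])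
    using h(3,4) eq m1 m2 inT by simp
qed

lemma bot_marker:
  assumes "fully_consistent S M" "consistent T M" "\<forall>Q\<in>T. is_rect Q"
    "{a..b} \<times> {c..d} \<in> S" "a < b" "c < d"
  shows "\<exists>a2 b2 d2 x. {a2..b2} \<times> {c..d2} \<in> T \<and> a2 < b2 \<and> c < d2 \<and> a \<le> x \<and> x \<le> b \<and> a2 \<le> x \<and> x \<le> b2"
proof -
  have "({a..b} \<times> {c}, (0,-1)) \<in> edges ({a..b} \<times> {c..d})" using edges_eq[OF assms(5,6)] by simp
  from get_marker[OF assms this] obtain P a2 b2 c2 d2 p e2 where
    h: "P \<in> T" "P = {a2..b2} \<times> {c2..d2}" "a2 < b2" "c2 < d2" "p \<in> {a..b} \<times> {c}"
    "e2 \<in> edges P" "snd e2 = (0,-1)" "p \<in> fst e2" by auto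
  have "e2 = ({a2..b2} \<times> {c2}, (0,-1))" using h(6,7) edges_eq[OF h(3,4)] h(2) pick4(4) by metis
  then have pe: "p \<in> {a2..b2} \<times> {c2}" using h(8) by simp
  have eq: "c2 = c" using pe h(5) by (cases p) auto
  have m1: "fst p \<in> {a..b}" using h(5) by (simp add: mem_Times_iff)
  have m2: "fst p \<in> {a2..b2}" using pe by (simp add: mem_Times_iff)
  have inT: "{a2..b2} \<times> {c..d2} \<in> T" using h(1,2) eq by simp
  show ?thesis
    apply (rule exI[of _ a2], rule exI[of _ b2], rule exI[of _ d2], rule exI[of _ "fst p"])
    using h(3,4) eq m1 m2 inT by simp
qed

lemma core:
  fixes S T :: "(real \<times> real) set set"
  assumes rS: "\<forall>Q\<in>S. is_rect Q" and dS: "pairwise disjnt S"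
    and rT: "\<forall>Q\<in>T. is_rect Q" and dT: "pairwise disjnt T"
    and fS: "fully_consistent S M" and fT: "fully_consistent T M"
    and H: "\<And>Q a b c e. Q \<in> S \<union> T \<Longrightarrow> Q = {a..b} \<times> {c..e} \<Longrightarrow> a < b \<Longrightarrow> c < e \<Longrightarrow> e < d
              \<Longrightarrow> Q \<in> S \<and> Q \<in> T"
    and R: "{a..b} \<times> {c..d} \<in> S" "a < b" "c < d"
    and R': "{a'..b'} \<times> {c'..d} \<in> T" "a' < b'" "c' < d"
    and x0: "a \<le> x0" "x0 \<le> b" "a' \<le> x0" "x0 \<le> b'" and cc: "c \<le> c'"
  shows "a = a' \<and> b = b' \<and> c = c'"
proof -
  have cS: "consistent S M" and cT: "consistent T M"
    using fS fT unfolding fully_consistent_def by auto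
  have s1: "a' \<le> a"
  proof (rule ccontr)
    assume "\<not> a' \<le> a"
    obtain b2 c2 d2 y where P: "{a'..b2} \<times> {c2..d2} \<in> S" "a' < b2" "c2 < d2"
      "c' \<le> y" "y \<le> d" "c2 \<le> y" "y \<le> d2"
      using left_marker[OF fT cS rS R'] by blast
    have "{a'..b2} \<times> {c2..d2} = {a..b} \<times> {c..d}"
      by (rule disj_pt[OF dS P(1) R(1), of "(a',y)"]) (use P x0 cc \<open>\<not> a' \<le> a\<close> in auto)
    then show False using rect_eq[OF P(2,3)] \<open>\<not> a' \<le> a\<close> by auto
  qed
  have s2: "b \<le> b'"
  proof (rule ccontr)
    assume "\<not> b \<le> b'"
    obtain a2 c2 d2 y where P: "{a2..b'} \<times> {c2..d2} \<in> S" "a2 < b'" "c2 < d2"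
      "c' \<le> y" "y \<le> d" "c2 \<le> y" "y \<le> d2"
      using right_marker[OF fT cS rS R'] by blast
    have "{a2..b'} \<times> {c2..d2} = {a..b} \<times> {c..d}"
      by (rule disj_pt[OF dS P(1) R(1), of "(b',y)"]) (use P x0 cc \<open>\<not> b \<le> b'\<close> in auto)
    then show False using rect_eq[OF P(2,3)] \<open>\<not> b \<le> b'\<close> by auto
  qed
  have s3: "a \<le> a'"
  proof (rule ccontr)
    assume na: "\<not> a \<le> a'"
    obtain b2 c2 d2 y where P: "{a..b2} \<times> {c2..d2} \<in> T" "a < b2" "c2 < d2"
      "c \<le> y" "y \<le> d" "c2 \<le> y" "y \<le> d2"
      using left_marker[OF fS cT rT R] by blast
    have "d \<le> d2"
    proof (rule ccontr)
      assume "\<not> d \<le> d2"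
      then have "{a..b2} \<times> {c2..d2} \<in> S" using H[of "{a..b2} \<times> {c2..d2}" a b2 c2 d2] P by auto
      then have "{a..b2} \<times> {c2..d2} = {a..b} \<times> {c..d}"
        by (rule disj_pt[OF dS _ R(1), of _ "(a,y)"]) (use P R in auto)
      then show False using rect_eq[OF P(2,3)] \<open>\<not> d \<le> d2\<close> by auto
    qed
    have "{a..b2} \<times> {c2..d2} = {a'..b'} \<times> {c'..d}"
      by (rule disj_pt[OF dT P(1) R'(1), of "(a,d)"]) (use P R R' s2 \<open>d \<le> d2\<close> na in auto)
    then show False using rect_eq[OF P(2,3)] na by auto
  qed
  have s4: "b' \<le> b"
  proof (rule ccontr)
    assume nb: "\<not> b' \<le> b"
    obtain a2 c2 d2 y where P: "{a2..b} \<times> {c2..d2} \<in> T" "a2 < b" "c2 < d2"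
      "c \<le> y" "y \<le> d" "c2 \<le> y" "y \<le> d2"
      using right_marker[OF fS cT rT R] by blast
    have "d \<le> d2"
    proof (rule ccontr)
      assume "\<not> d \<le> d2"
      then have "{a2..b} \<times> {c2..d2} \<in> S" using H[of "{a2..b} \<times> {c2..d2}" a2 b c2 d2] P by auto
      then have "{a2..b} \<times> {c2..d2} = {a..b} \<times> {c..d}"
        by (rule disj_pt[OF dS _ R(1), of _ "(b,y)"]) (use P R in auto)
      then show False using rect_eq[OF P(2,3)] \<open>\<not> d \<le> d2\<close> by auto
    qed
    have "{a2..b} \<times> {c2..d2} = {a'..b'} \<times> {c'..d}"
      by (rule disj_pt[OF dT P(1) R'(1), of "(b,d)"]) (use P R R' s1 \<open>d \<le> d2\<close> nb in auto)
    then show False using rect_eq[OF P(2,3)] nb by auto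
  qed
  have s5: "c' \<le> c"
  proof (rule ccontr)
    assume nc: "\<not> c' \<le> c"
    obtain a2 b2 d2 x where P: "{a2..b2} \<times> {c'..d2} \<in> S" "a2 < b2" "c' < d2"
      "a' \<le> x" "x \<le> b'" "a2 \<le> x" "x \<le> b2"
      using bot_marker[OF fT cS rS R'] by blast
    have "{a2..b2} \<times> {c'..d2} = {a..b} \<times> {c..d}"
      by (rule disj_pt[OF dS P(1) R(1), of "(x,c')"]) (use P R R' s1 s2 s3 s4 nc in auto)
    then show False using rect_eq[OF P(2,3)] nc by auto
  qed
  show ?thesis using s1 s2 s3 s4 s5 cc by auto
qed


lemma half:
  fixes S T :: "(real \<times> real) set set"
  assumes rS: "\<forall>Q\<in>S. is_rect Q" and dS: "pairwise disjnt S"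
    and rT: "\<forall>Q\<in>T. is_rect Q" and dT: "pairwise disjnt T"
    and fS: "fully_consistent S M" and fT: "fully_consistent T M"
    and H: "\<And>Q a b c e. Q \<in> S \<union> T \<Longrightarrow> Q = {a..b} \<times> {c..e} \<Longrightarrow> a < b \<Longrightarrow> c < e \<Longrightarrow> e < d
              \<Longrightarrow> Q \<in> S \<and> Q \<in> T"
    and R: "{a..b} \<times> {c..d} \<in> S" "a < b" "c < d"
  shows "{a..b} \<times> {c..d} \<in> T"
proof -
  have cT: "consistent T M" using fT unfolding fully_consistent_def by auto
  obtain a2 b2 c2 x where P: "{a2..b2} \<times> {c2..d} \<in> T" "a2 < b2" "c2 < d"
      "a \<le> x" "x \<le> b" "a2 \<le> x" "x \<le> b2"
    using top_marker[OF fS cT rT R] by blast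
  show ?thesis
  proof (cases "c \<le> c2")
    case True
    have "a = a2 \<and> b = b2 \<and> c = c2"
      by (rule core[OF rS dS rT dT fS fT H R P(1-3) P(4-7) True])
    then show ?thesis using P by auto
  next
    case False
    have H': "\<And>Q a b c e. Q \<in> T \<union> S \<Longrightarrow> Q = {a..b} \<times> {c..e} \<Longrightarrow> a < b \<Longrightarrow> c < e \<Longrightarrow> e < d
              \<Longrightarrow> Q \<in> T \<and> Q \<in> S" using H by blast
    have "a2 = a \<and> b2 = b \<and> c2 = c"
      by (rule core[OF rT dT rS dS fT fS H' P(1-3) R P(6,7,4,5)]) (use False in auto)
    then show ?thesis using P by auto
  qed
qed

definition tp :: "(real \<times> real) set \<Rightarrow> real" where
  "tp Q = (SOME e. \<exists>a b c. a < b \<and> c < e \<and> Q = {a..b} \<times> {c..e})"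

lemma tp_eq:
  fixes a b c e :: real
  assumes "a < b" "c < e" "Q = {a..b} \<times> {c..e}"
  shows "tp Q = e"
proof -
  have "\<exists>a b c. a < b \<and> c < tp Q \<and> Q = {a..b} \<times> {c..tp Q}"
    unfolding tp_def by (rule someI[of _ e]) (use assms in blast)
  then obtain a2 b2 c2 where "a2 < b2" "c2 < tp Q" "Q = {a2..b2} \<times> {c2..tp Q}" by blast
  then show ?thesis using rect_eq[OF assms(1,2)] assms(3) by metis
qed

theorem mainTheorem14:
  fixes S S' :: "(real \<times> real) set set" and M :: "((real \<times> real) \<times> (real \<times> real)) set"
  assumes "finite S" "\<forall>Q\<in>S. is_rect Q" "pairwise disjnt S"
    and "finite S'" "\<forall>Q\<in>S'. is_rect Q" "pairwise disjnt S'"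
    and "finite M" "\<forall>m\<in>M. is_marker m"
    and "fully_consistent S M" "fully_consistent S' M"
  shows "S = S'"
proof (rule ccontr)
  assume ne: "S \<noteq> S'"
  define D where "D = (S - S') \<union> (S' - S)"
  have fD: "finite D" using assms(1,4) unfolding D_def by auto
  have nD: "D \<noteq> {}" using ne unfolding D_def by auto
  define d where "d = Min (tp ` D)"
  have "d \<in> tp ` D" unfolding d_def using fD nD by (intro Min_in) auto
  then obtain R where RD: "R \<in> D" "tp R = d" by auto
  have Rr: "is_rect R" using RD(1) assms(2,5) unfolding D_def by auto
  then obtain a b c e where r: "a < b" "c < e" "R = {a..b} \<times> {c..e}" unfolding is_rect_def by blast
  have "e = d" using tp_eq[OF r] RD(2) by simp
  have H: "\<And>Q a b c e. Q \<in> S \<union> S' \<Longrightarrow> Q = {a..b} \<times> {c..e} \<Longrightarrow> a < b \<Longrightarrow> c < e \<Longrightarrow> e < d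
              \<Longrightarrow> Q \<in> S \<and> Q \<in> S'"
  proof -
    fix Q a b c e
    assume h: "Q \<in> S \<union> S'" "Q = {a..b} \<times> {c..e}" "a < b" "c < e" "e < d"
    have "tp Q = e" using tp_eq[OF h(3,4,2)] .
    then have "Q \<notin> D" using h(5) fD unfolding d_def by (metis Min_le finite_imageI image_eqI not_le)
    then show "Q \<in> S \<and> Q \<in> S'" using h(1) unfolding D_def by auto
  qed
  show False
  proof (cases "R \<in> S")
    case True
    then have "R \<in> S'"
      using half[OF assms(2,3,5,6,9,10) H, where a=a and b=b and c=c] r \<open>e = d\<close> by auto
    then show False using RD(1) True unfolding D_def by auto
  next
    case False
    have H': "\<And>Q a b c e. Q \<in> S' \<union> S \<Longrightarrow> Q = {a..b} \<times> {c..e} \<Longrightarrow> a < b \<Longrightarrow> c < e \<Longrightarrow> e < d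
              \<Longrightarrow> Q \<in> S' \<and> Q \<in> S" using H by blast
    have "R \<in> S'" using RD(1) False unfolding D_def by auto
    then have "R \<in> S"
      using half[OF assms(5,6,2,3,10,9) H', where a=a and b=b and c=c] r \<open>e = d\<close> by auto
    then show False using False by auto
  qed
qed

end
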